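(* Let $X$ be a continuous vector field on $\mathbb{S}^1$. Then for any $A\in\mathrm{O}_0(1,2)$ and $v\in\mathbb{R}^{1,2}$, $w(A_*X+\Lambda(v))=w(X)$.
   Context: $\mathbb{R}^{1,2}$ is $\mathbb{R}^3$ with $\langle x,y\rangle=-x_0y_0+x_1y_1+x_2y_2$; $\mathrm{O}_0(1,2)$ is the identity component of its linear isometry group, acting on $\overline{\mathbb{D}^2}$ by $A\cdot\eta=\Pi(A(1,\eta))$, $\Pi(x_0,x_1,x_2)=(x_1/x_0,x_2/x_0)$; $A_*X$ is the pushforward of $X$ by $z\mapsto A\cdot z$ on $\mathbb{S}^1$. $\Lambda(v)$ is the Killing field (extended to $\mathbb{S}^1$) $\eta\mapsto\mathrm{d}_{(1,\eta)}\Pi((1,\eta)\boxtimes v)$, where $\langle x\boxtimes y,u\rangle=\det(x,y,u)$. A vector field $Y$ on $\mathbb{S}^1$ is $Y(z)=iz\phi_Y(z)$. $\phi_Y^-(\eta)=\sup\{a(\eta):a\text{ affine},a|_{\mathbb{S}^1}\le\phi_Y\}$, $\phi_Y^+(\eta)=\inf\{a(\eta):a\text{ affine},a|_{\mathbb{S}^1}\ge\phi_Y\}$. Width: $w(Y)=\sup_{\eta\in\mathbb{D}^2}\frac{\phi_Y^+(\eta)-\phi_Y^-(\eta)}{\sqrt{1-|\eta|^2}}\in[0,+\infty]$. *)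

theory Defs
  imports "HOL-Analysis.Analysis"
begin

text \<open>Minkowski space R^{1,2} is real^3 with coordinates x$1 = x_0, x$2 = x_1, x$3 = x_2.
  Points of the closed disk / circle are complex numbers.\<close>

definition mink :: "real^3 \<Rightarrow> real^3 \<Rightarrow> real" where
  "mink x y = - (x$1 * y$1) + x$2 * y$2 + x$3 * y$3"

definition O12 :: "(real^3^3) set" where
  "O12 = {A. \<forall>x y. mink (A *v x) (A *v y) = mink x y}"

definition O0_12 :: "(real^3^3) set" where
  "O0_12 = {A. connected_component O12 (mat 1) A}"

definition Pi_proj :: "real^3 \<Rightarrow> complex" where
  "Pi_proj x = Complex (x$2 / x$1) (x$3 / x$1)"

definition lift :: "complex \<Rightarrow> real^3" where
  "lift \<eta> = vector [1, Re \<eta>, Im \<eta>]"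

definition act :: "real^3^3 \<Rightarrow> complex \<Rightarrow> complex" where
  "act A \<eta> = Pi_proj (A *v lift \<eta>)"

definition pushfwd :: "real^3^3 \<Rightarrow> (complex \<Rightarrow> complex) \<Rightarrow> complex \<Rightarrow> complex" where
  "pushfwd A X w = (let z = act (matrix_inv A) w in frechet_derivative (act A) (at z) (X z))"

definition mcross :: "real^3 \<Rightarrow> real^3 \<Rightarrow> real^3" where
  "mcross x y = (THE w. \<forall>u. mink w u = det (vector [x, y, u] :: real^3^3))"

definition Killing :: "real^3 \<Rightarrow> complex \<Rightarrow> complex" where
  "Killing v \<eta> = frechet_derivative Pi_proj (at (lift \<eta>)) (mcross (lift \<eta>) v)"

definition vfield_on_circle :: "(complex \<Rightarrow> complex) \<Rightarrow> bool" where
  "vfield_on_circle Y \<longleftrightarrow> (\<forall>z\<in>sphere 0 1. Y z / (\<i> * z) \<in> \<real>)"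

definition phiY :: "(complex \<Rightarrow> complex) \<Rightarrow> complex \<Rightarrow> real" where
  "phiY Y z = Re (Y z / (\<i> * z))"

definition affine_fun :: "(complex \<Rightarrow> real) \<Rightarrow> bool" where
  "affine_fun a \<longleftrightarrow> (\<exists>b c. a = (\<lambda>\<eta>. c + b \<bullet> \<eta>))"

definition phi_minus :: "(complex \<Rightarrow> complex) \<Rightarrow> complex \<Rightarrow> real" where
  "phi_minus Y \<eta> = Sup {a \<eta> | a. affine_fun a \<and> (\<forall>z\<in>sphere 0 1. a z \<le> phiY Y z)}"

definition phi_plus :: "(complex \<Rightarrow> complex) \<Rightarrow> complex \<Rightarrow> real" where
  "phi_plus Y \<eta> = Inf {a \<eta> | a. affine_fun a \<and> (\<forall>z\<in>sphere 0 1. a z \<ge> phiY Y z)}"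

definition width :: "(complex \<Rightarrow> complex) \<Rightarrow> ereal" where
  "width Y = (SUP \<eta>\<in>ball 0 1. ereal ((phi_plus Y \<eta> - phi_minus Y \<eta>) / sqrt (1 - (cmod \<eta>)\<^sup>2)))"

end

theory Submission
  imports Defs
begin

lemma forall3: "(\<forall>i::3. P i) \<longleftrightarrow> P 1 \<and> P 2 \<and> P 3"
  by (metis exhaust_3)

lemma vec3_eq: "(x::real^3) = y \<longleftrightarrow> x$1 = y$1 \<and> x$2 = y$2 \<and> x$3 = y$3"
  by (simp add: vec_eq_iff forall3)

lemma lift_nth[simp]: "lift \<eta> $ 1 = 1" "lift \<eta> $ 2 = Re \<eta>" "lift \<eta> $ 3 = Im \<eta>"
  by (simp_all add: lift_def)

lemma mink_lift: "mink (lift \<eta>) (lift \<eta>) = (cmod \<eta>)^2 - 1"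
  unfolding mink_def cmod_power2 by (simp add: power2_eq_square)

lemma Pi_proj_lift[simp]: "Pi_proj (lift \<eta>) = \<eta>"
  by (simp add: Pi_proj_def complex_eq_iff)

lemma Pi_proj_scale: "c \<noteq> 0 \<Longrightarrow> Pi_proj (c *\<^sub>R y) = Pi_proj y"
  by (simp add: Pi_proj_def)

lemma lift_Pi: "y$1 \<noteq> 0 \<Longrightarrow> y = y$1 *\<^sub>R lift (Pi_proj y)"
  by (simp add: vec3_eq Pi_proj_def)

lemma mink_scale: "mink (c *\<^sub>R x) (d *\<^sub>R y) = c * d * mink x y"
  by (simp add: mink_def algebra_simps)

lemma mink_sym: "mink x y = mink y x"
  by (simp add: mink_def algebra_simps)

lemma mink_self_Pi: "y$1 \<noteq> 0 \<Longrightarrow> mink y y = (y$1)^2 * ((cmod (Pi_proj y))^2 - 1)"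
  by (metis lift_Pi mink_lift mink_scale power2_eq_square)

lemma causal_nz: "mink x x \<le> 0 \<Longrightarrow> x \<noteq> 0 \<Longrightarrow> x$1 \<noteq> 0"
proof
  assume "mink x x \<le> 0" "x \<noteq> 0" "x$1 = 0"
  then have "x$2 * x$2 + x$3 * x$3 \<le> 0" by (simp add: mink_def)
  then have "x$2 = 0" "x$3 = 0" by (simp_all add: sum_squares_le_zero_iff)
  with \<open>x$1 = 0\<close> \<open>x \<noteq> 0\<close> show False by (simp add: vec3_eq)
qed

definition Jm :: "real^3^3" where "Jm = (\<chi> i j. if i = j then (if i = 1 then -1 else 1) else 0)"

lemma det_Jm: "det Jm = -1"
  by (simp add: det_3 Jm_def)

lemma mv_axis: "(A *v axis i (1::real)) $ k = A $ k $ i"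
  by (simp add: matrix_vector_mult_def axis_def if_distrib cong: if_cong)

lemma Jm_entry: "Jm $ i $ j = mink (axis i 1) (axis j 1)"
  using exhaust_3[of i] exhaust_3[of j] by (auto simp: Jm_def mink_def axis_def)

lemma O12_matrix: assumes "A \<in> O12" shows "transpose A ** Jm ** A = Jm"
proof -
  have h: "mink (A *v axis i 1) (A *v axis j 1) = mink (axis i 1) (axis j 1)" for i j
    using assms by (simp add: O12_def)
  have e: "(transpose A ** Jm ** A) $ i $ j = mink (A *v axis i 1) (A *v axis j 1)" for i j
    unfolding mv_axis mink_def
    by (simp add: matrix_matrix_mult_def transpose_def Jm_def sum_3 algebra_simps)
  show ?thesis
    by (simp add: vec_eq_iff e h Jm_entry)
qed

lemma O12_det: assumes "A \<in> O12" shows "(det A)^2 = 1"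
proof -
  have "det (transpose A ** Jm ** A) = det Jm" using O12_matrix[OF assms] by simp
  then have "det A * det Jm * det A = det Jm" by (simp add: det_mul)
  then show ?thesis by (simp add: det_Jm power2_eq_square)
qed

lemma O12_invertible: assumes "A \<in> O12" shows "invertible A"
  using O12_det[OF assms] invertible_det_nz by fastforce

lemma inv_props: assumes "A \<in> O12"
  shows "A ** matrix_inv A = mat 1" "matrix_inv A ** A = mat 1"
proof -
  have "\<exists>A'. A ** A' = mat 1 \<and> A' ** A = mat 1"
    using O12_invertible[OF assms] by (simp add: invertible_def)
  then have "A ** matrix_inv A = mat 1 \<and> matrix_inv A ** A = mat 1"
    unfolding matrix_inv_def by (rule someI_ex)
  then show "A ** matrix_inv A = mat 1" "matrix_inv A ** A = mat 1" by auto
qed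

lemma inv_O12: assumes "A \<in> O12" shows "matrix_inv A \<in> O12"
proof -
  have "mink (matrix_inv A *v x) (matrix_inv A *v y) = mink x y" for x y
  proof -
    have "mink (matrix_inv A *v x) (matrix_inv A *v y) = mink (A *v (matrix_inv A *v x)) (A *v (matrix_inv A *v y))"
      using assms by (simp add: O12_def)
    also have "\<dots> = mink x y" by (simp add: matrix_vector_mul_assoc inv_props[OF assms])
    finally show ?thesis .
  qed
  then show ?thesis by (simp add: O12_def)
qed

lemma conn_pos:
  fixes f :: "real^3^3 \<Rightarrow> real"
  assumes "connected T" "continuous_on T f" "\<forall>M\<in>T. f M \<noteq> 0" "I \<in> T" "f I > 0" "A \<in> T"
  shows "f A > 0"
proof (rule ccontr)
  assume "\<not> f A > 0"
  then have "f A \<le> 0" by simp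
  have c: "connected (f ` T)" using assms connected_continuous_image by blast
  obtain z where "z \<in> f ` T" "inner 1 z = (0::real)"
    using connected_ivt_hyperplane[OF c, of "f A" "f I" 1 0] assms \<open>f A \<le> 0\<close> by auto
  then show False using assms by auto
qed

lemma O0_conn: assumes "A \<in> O0_12" obtains T where "connected T" "T \<subseteq> O12" "mat 1 \<in> T" "A \<in> T"
  using assms unfolding O0_12_def connected_component_def by blast

lemma cont_mv1: "continuous_on S (\<lambda>M::real^3^3. (M *v x) $ 1)"
  unfolding continuous_on_def matrix_vector_mult_def sum_3
  by (auto intro!: tendsto_intros)

lemma cont_det: "continuous_on S (\<lambda>M::real^3^3. det M)"
  unfolding continuous_on_def det_3
  by (auto intro!: tendsto_intros)

definition tp :: "real^3^3 \<Rightarrow> bool" where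
  "tp A \<longleftrightarrow> (\<forall>x. mink x x \<le> 0 \<and> x$1 > 0 \<longrightarrow> (A *v x)$1 > 0)"

lemma O0_tp: assumes "A \<in> O0_12" shows "tp A"
  unfolding tp_def
proof (intro allI impI)
  fix x :: "real^3" assume x: "mink x x \<le> 0 \<and> x$1 > 0"
  obtain T where T: "connected T" "T \<subseteq> O12" "mat 1 \<in> T" "A \<in> T" using O0_conn[OF assms] .
  have nz: "(M *v x) $ 1 \<noteq> 0" if "M \<in> T" for M
  proof -
    have M: "M \<in> O12" using that T by auto
    have "x \<noteq> 0" using x by auto
    then have "M *v x \<noteq> 0" using inj_matrix_vector_mult[OF O12_invertible[OF M]]
      by (metis injD matrix_vector_mult_0_right)
    moreover have "mink (M *v x) (M *v x) \<le> 0" using M x by (simp add: O12_def)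
    ultimately show ?thesis using causal_nz by blast
  qed
  show "(A *v x) $ 1 > 0"
    by (rule conn_pos[OF T(1) cont_mv1 _ T(3) _ T(4)]) (use nz x in auto)
qed

lemma O0_det: assumes "A \<in> O0_12" shows "det A = 1"
proof -
  obtain T where T: "connected T" "T \<subseteq> O12" "mat 1 \<in> T" "A \<in> T" using O0_conn[OF assms] .
  have nz: "det M \<noteq> 0" if "M \<in> T" for M
    using O12_det[of M] that T by auto
  have "det A > 0"
    by (rule conn_pos[OF T(1) cont_det _ T(3) _ T(4)]) (use nz in auto)
  moreover have "(det A)^2 = 1" using O12_det T by auto
  then have "(det A - 1) * (det A + 1) = 0" by (simp add: algebra_simps power2_eq_square)
  ultimately show ?thesis by auto
qed

lemma O0_O12: "A \<in> O0_12 \<Longrightarrow> A \<in> O12"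
  using O0_conn by blast

lemma tp_inv: assumes "A \<in> O12" "tp A" "A ** B = mat 1" "B \<in> O12" shows "tp B"
  unfolding tp_def
proof (intro allI impI)
  fix x :: "real^3" assume x: "mink x x \<le> 0 \<and> x$1 > 0"
  have "x \<noteq> 0" using x by auto
  then have "B *v x \<noteq> 0" using assms(3)
    by (metis matrix_vector_mul_assoc matrix_vector_mul_lid matrix_vector_mult_0_right)
  moreover have m: "mink (B *v x) (B *v x) \<le> 0" using assms(4) x by (simp add: O12_def)
  ultimately have nz: "(B *v x)$1 \<noteq> 0" using causal_nz by blast
  show "(B *v x)$1 > 0"
  proof (rule ccontr)
    assume "\<not> (B *v x)$1 > 0"
    then have neg: "(-(B *v x))$1 > 0" using nz by simp
    have "mink (-(B *v x)) (-(B *v x)) \<le> 0" using m by (simp add: mink_def)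
    then have "(A *v (-(B *v x)))$1 > 0" using assms(2) neg unfolding tp_def by blast
    moreover have "A *v (B *v x) = x" by (simp add: matrix_vector_mul_assoc assms(3))
    then have "A *v (-(B *v x)) = - x" by (metis matrix_vector_mult_scaleR scaleR_minus1_left)
    ultimately show False using x by simp
  qed
qed

lemma pos_lift: assumes "tp A" "cmod z \<le> 1" shows "(A *v lift z)$1 > 0"
proof -
  have "(cmod z)^2 \<le> 1" using assms(2) by (simp add: power_le_one)
  then have "mink (lift z) (lift z) \<le> 0" by (simp add: mink_lift)
  then show ?thesis using assms(1) unfolding tp_def by simp
qed

lemma lift_act: assumes "tp A" "cmod z \<le> 1"
  shows "A *v lift z = (A *v lift z)$1 *\<^sub>R lift (act A z)"
  using lift_Pi[of "A *v lift z"] pos_lift[OF assms] by (simp add: act_def)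

lemma act_norm: assumes "A \<in> O12" "tp A" "cmod z \<le> 1"
  shows "(cmod (act A z))^2 - 1 = ((cmod z)^2 - 1) / ((A *v lift z)$1)^2"
proof -
  have p: "(A *v lift z)$1 > 0" using pos_lift assms(2,3) by blast
  have "mink (A *v lift z) (A *v lift z) = (cmod z)^2 - 1" using assms(1) by (simp add: O12_def mink_lift)
  moreover have "mink (A *v lift z) (A *v lift z) = ((A *v lift z)$1)^2 * ((cmod (act A z))^2 - 1)"
    using mink_self_Pi[of "A *v lift z"] p by (simp add: act_def)
  ultimately show ?thesis using p by (simp add: field_simps)
qed

lemma act_sphere: assumes "A \<in> O12" "tp A" "z \<in> sphere 0 1" shows "act A z \<in> sphere 0 1"
proof -
  have "(cmod (act A z))^2 - 1 = 0" using act_norm[OF assms(1,2)] assms(3) by simp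
  then have "(cmod (act A z))^2 = 1" by simp
  then have "cmod (act A z) = 1 \<or> cmod (act A z) = -1" by (simp add: power2_eq_1_iff)
  then show ?thesis using norm_ge_zero[of "act A z"] by auto
qed

lemma act_ball: assumes "A \<in> O12" "tp A" "z \<in> ball 0 1" shows "act A z \<in> ball 0 1"
proof -
  have z: "cmod z < 1" using assms(3) by simp
  then have "(cmod z)^2 < 1" by (simp add: power_less_one_iff abs_square_less_1)
  moreover have "(A *v lift z)$1 > 0" using pos_lift[OF assms(2), of z] z by simp
  then have "((A *v lift z)$1)^2 > 0" by simp
  ultimately have "(cmod (act A z))^2 - 1 < 0" using act_norm[OF assms(1,2)] z
    by (simp add: divide_neg_pos)
  then have "(cmod (act A z))^2 < 1" by simp
  then show ?thesis by (simp add: abs_square_less_1)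
qed

lemma act_inv: assumes "A ** B = mat 1" "tp B" "cmod w \<le> 1"
  shows "act A (act B w) = w"
proof -
  let ?m = "(B *v lift w)$1"
  have m: "?m > 0" using pos_lift assms(2,3) by blast
  have "lift w = A *v (B *v lift w)" using assms(1) by (simp add: matrix_vector_mul_assoc)
  also have "\<dots> = ?m *\<^sub>R (A *v lift (act B w))"
    using lift_act[OF assms(2,3)] by (metis matrix_vector_mult_scaleR)
  finally have eq: "lift w = ?m *\<^sub>R (A *v lift (act B w))" .
  have "A *v lift (act B w) = (1 / ?m) *\<^sub>R lift w" using m by (subst eq) simp
  then show ?thesis using m by (simp add: act_def Pi_proj_scale)
qed


lemma inner3: "(p::real^3) \<bullet> y = p$1*y$1 + p$2*y$2 + p$3*y$3"
  by (simp add: inner_vec_def sum_3)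

lemma affine_iff: "affine_fun a \<longleftrightarrow> (\<exists>p::real^3. a = (\<lambda>\<eta>. p \<bullet> lift \<eta>))"
proof
  assume "affine_fun a"
  then obtain b c where a: "a = (\<lambda>\<eta>. c + b \<bullet> \<eta>)" by (auto simp: affine_fun_def)
  show "\<exists>p::real^3. a = (\<lambda>\<eta>. p \<bullet> lift \<eta>)"
    by (rule exI[of _ "vector [c, Re b, Im b]"]) (simp add: a inner3 inner_complex_def fun_eq_iff)
next
  assume "\<exists>p::real^3. a = (\<lambda>\<eta>. p \<bullet> lift \<eta>)"
  then obtain p :: "real^3" where a: "a = (\<lambda>\<eta>. p \<bullet> lift \<eta>)" by blast
  show "affine_fun a" unfolding affine_fun_def
    by (rule exI[of _ "Complex (p$2) (p$3)"], rule exI[of _ "p$1"])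
      (simp add: a inner3 inner_complex_def fun_eq_iff)
qed

definition UP :: "(complex \<Rightarrow> real) \<Rightarrow> complex \<Rightarrow> real set" where
  "UP \<phi> \<eta> = {p \<bullet> lift \<eta> | p. \<forall>z\<in>sphere 0 1. \<phi> z \<le> p \<bullet> lift z}"

lemma phi_plus_UP: "phi_plus Y \<eta> = Inf (UP (phiY Y) \<eta>)"
proof -
  have "{a \<eta> | a. affine_fun a \<and> (\<forall>z\<in>sphere 0 1. a z \<ge> phiY Y z)} = UP (phiY Y) \<eta>"
  proof (rule set_eqI, rule iffI)
    fix x assume "x \<in> {a \<eta> | a. affine_fun a \<and> (\<forall>z\<in>sphere 0 1. a z \<ge> phiY Y z)}"
    then obtain p :: "real^3" where x: "x = p \<bullet> lift \<eta>" and hp: "\<forall>z\<in>sphere 0 1. p \<bullet> lift z \<ge> phiY Y z"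
      unfolding affine_iff by blast
    show "x \<in> UP (phiY Y) \<eta>" unfolding UP_def mem_Collect_eq
      by (rule exI[of _ p]) (use x hp in auto)
  next
    fix x assume "x \<in> UP (phiY Y) \<eta>"
    then obtain p :: "real^3" where x: "x = p \<bullet> lift \<eta>" and hp: "\<forall>z\<in>sphere 0 1. p \<bullet> lift z \<ge> phiY Y z"
      unfolding UP_def by blast
    have "affine_fun (\<lambda>\<eta>. p \<bullet> lift \<eta>)" unfolding affine_iff by blast
    then show "x \<in> {a \<eta> | a. affine_fun a \<and> (\<forall>z\<in>sphere 0 1. a z \<ge> phiY Y z)}"
      unfolding mem_Collect_eq by (intro exI[of _ "\<lambda>\<eta>. p \<bullet> lift \<eta>"]) (use x hp in simp)
  qed
  then show ?thesis by (simp add: phi_plus_def)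
qed

lemma phi_minus_UP: "phi_minus Y \<eta> = - Inf (UP (\<lambda>z. - phiY Y z) \<eta>)"
proof -
  have "{a \<eta> | a. affine_fun a \<and> (\<forall>z\<in>sphere 0 1. a z \<le> phiY Y z)} = uminus ` UP (\<lambda>z. - phiY Y z) \<eta>"
  proof (rule set_eqI, rule iffI)
    fix x assume "x \<in> {a \<eta> | a. affine_fun a \<and> (\<forall>z\<in>sphere 0 1. a z \<le> phiY Y z)}"
    then obtain p :: "real^3" where x: "x = p \<bullet> lift \<eta>" and hp: "\<forall>z\<in>sphere 0 1. p \<bullet> lift z \<le> phiY Y z"
      unfolding affine_iff by blast
    have "(-p) \<bullet> lift \<eta> \<in> UP (\<lambda>z. - phiY Y z) \<eta>" unfolding UP_def mem_Collect_eq
      by (rule exI[of _ "-p"]) (use hp in auto)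
    moreover have "x = - ((-p) \<bullet> lift \<eta>)" using x by simp
    ultimately show "x \<in> uminus ` UP (\<lambda>z. - phiY Y z) \<eta>" by blast
  next
    fix x assume "x \<in> uminus ` UP (\<lambda>z. - phiY Y z) \<eta>"
    then obtain p :: "real^3" where x: "x = - (p \<bullet> lift \<eta>)" and hp: "\<forall>z\<in>sphere 0 1. - phiY Y z \<le> p \<bullet> lift z"
      unfolding UP_def by blast
    have "affine_fun (\<lambda>\<eta>. (-p) \<bullet> lift \<eta>)" unfolding affine_iff by blast
    moreover have "\<forall>z\<in>sphere 0 1. (-p) \<bullet> lift z \<le> phiY Y z" using hp by auto
    moreover have "x = (-p) \<bullet> lift \<eta>" using x by simp
    ultimately show "x \<in> {a \<eta> | a. affine_fun a \<and> (\<forall>z\<in>sphere 0 1. a z \<le> phiY Y z)}"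
      unfolding mem_Collect_eq by (intro exI[of _ "\<lambda>\<eta>. (-p) \<bullet> lift \<eta>"]) simp
  qed
  then have "phi_minus Y \<eta> = Sup (uminus ` UP (\<lambda>z. - phiY Y z) \<eta>)" by (simp add: phi_minus_def)
  also have "\<dots> = - Inf (UP (\<lambda>z. - phiY Y z) \<eta>)" by (simp add: Inf_real_def image_image)
  finally show ?thesis .
qed

lemma Inf_affine:
  fixes S :: "real set"
  assumes ne: "S \<noteq> {}" and bdd: "bdd_below S" and m: "m > 0"
  shows "Inf ((\<lambda>s. m * s + c) ` S) = m * Inf S + c"
proof (rule antisym)
  obtain L where L: "\<forall>s\<in>S. L \<le> s" using bdd by (auto simp: bdd_below_def)
  have bdd2: "bdd_below ((\<lambda>s. m * s + c) ` S)"
    unfolding bdd_below_def using L m by (auto intro!: exI[of _ "m * L + c"])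
  have "(Inf ((\<lambda>s. m * s + c) ` S) - c) / m \<le> Inf S"
  proof (rule cInf_greatest[OF ne])
    fix s assume s: "s \<in> S"
    have "Inf ((\<lambda>s. m * s + c) ` S) \<le> m * s + c" by (rule cInf_lower[OF imageI[OF s] bdd2])
    then show "(Inf ((\<lambda>s. m * s + c) ` S) - c) / m \<le> s" using m by (simp add: pos_divide_le_eq algebra_simps)
  qed
  then show "Inf ((\<lambda>s. m * s + c) ` S) \<le> m * Inf S + c" using m by (simp add: pos_divide_le_eq algebra_simps)
  show "m * Inf S + c \<le> Inf ((\<lambda>s. m * s + c) ` S)"
  proof (rule cInf_greatest)
    show "(\<lambda>s. m * s + c) ` S \<noteq> {}" using ne by simp
    fix y assume "y \<in> (\<lambda>s. m * s + c) ` S"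
    then obtain s where s: "s \<in> S" "y = m * s + c" by auto
    have "Inf S \<le> s" by (rule cInf_lower[OF s(1) bdd])
    then show "m * Inf S + c \<le> y" using s(2) m by simp
  qed
qed

lemma UP_ne: assumes "\<forall>z\<in>sphere 0 1. \<bar>\<phi> z\<bar> \<le> M" shows "UP \<phi> \<eta> \<noteq> {}"
proof -
  have "\<forall>z\<in>sphere 0 1. \<phi> z \<le> (vector [M, 0, 0] :: real^3) \<bullet> lift z"
    using assms by (auto simp: inner3)
  then show ?thesis unfolding UP_def by blast
qed

lemma UP_bdd: assumes bnd: "\<forall>z\<in>sphere 0 1. \<bar>\<phi> z\<bar> \<le> M" and eta: "\<eta> \<in> ball 0 1"
  shows "bdd_below (UP \<phi> \<eta>)"
proof -
  define a where "a = Re \<eta>"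
  define b where "b = Im \<eta>"
  have ab: "a^2 + b^2 < 1" using eta by (simp add: a_def b_def cmod_power2[symmetric] abs_square_less_1)
  define s where "s = sqrt (1 - a^2)"
  have a1: "a^2 \<le> 1" using ab zero_le_power2[of b] by linarith
  have s2: "s^2 = 1 - a^2" unfolding s_def using a1 by simp
  have s0: "s > 0" unfolding s_def using ab by (smt (verit) real_sqrt_gt_zero zero_le_power2)
  have bs: "b^2 < s^2" using ab s2 by simp
  then have "\<bar>b\<bar>^2 < s^2" by simp
  then have bs': "\<bar>b\<bar> < s" by (rule power2_less_imp_less) (use s0 in auto)
  define zp where "zp = Complex a s"
  define zm where "zm = Complex a (-s)"
  have zps: "zp \<in> sphere 0 1" "zm \<in> sphere 0 1"
    by (simp_all add: zp_def zm_def cmod_def s2)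
  define t where "t = (b + s) / (2 * s)"
  have t0: "0 \<le> t" "t \<le> 1" using bs' s0 by (auto simp: t_def field_simps)
  have "\<forall>p. (\<forall>z\<in>sphere 0 1. \<phi> z \<le> p \<bullet> lift z) \<longrightarrow> -M \<le> p \<bullet> lift \<eta>"
  proof (intro allI impI)
    fix p :: "real^3" assume hp: "\<forall>z\<in>sphere 0 1. \<phi> z \<le> p \<bullet> lift z"
    have e: "p \<bullet> lift \<eta> = t * (p \<bullet> lift zp) + (1 - t) * (p \<bullet> lift zm)"
      using s0 by (simp add: inner3 t_def zp_def zm_def a_def[symmetric] b_def[symmetric] field_simps)
    have "-M \<le> p \<bullet> lift zp" using hp bnd zps by force
    then have 1: "t * (-M) \<le> t * (p \<bullet> lift zp)" using t0 by (intro mult_left_mono) auto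
    have "-M \<le> p \<bullet> lift zm" using hp bnd zps by force
    then have 2: "(1 - t) * (-M) \<le> (1 - t) * (p \<bullet> lift zm)" using t0 by (intro mult_left_mono) auto
    show "-M \<le> p \<bullet> lift \<eta>" using 1 2 e by (simp add: algebra_simps)
  qed
  then show ?thesis unfolding UP_def bdd_below_def by blast
qed



lemma inner_transpose: "(transpose A *v p) \<bullet> y = p \<bullet> (A *v (y::real^3))"
  by (simp add: dot_lmul_matrix)

lemma core:
  fixes \<phi> \<psi> :: "complex \<Rightarrow> real"
  assumes AO: "A \<in> O12" "B \<in> O12" "A ** B = mat 1" "B ** A = mat 1" "tp A" "tp B"
    and bnd: "\<forall>z\<in>sphere 0 1. \<bar>\<phi> z\<bar> \<le> M"
    and rel: "\<forall>w\<in>sphere 0 1. \<psi> w = (B *v lift w)$1 * \<phi> (act B w) + q \<bullet> lift w"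
    and eta: "\<eta> \<in> ball 0 1"
  shows "Inf (UP \<psi> \<eta>) = (B *v lift \<eta>)$1 * Inf (UP \<phi> (act B \<eta>)) + q \<bullet> lift \<eta>"
proof -
  define mm where "mm = (B *v lift \<eta>)$1"
  let ?m = mm
  let ?e = "act B \<eta>"
  have ce: "cmod \<eta> \<le> 1" using eta by simp
  have m: "?m > 0" using pos_lift[OF AO(6) ce] unfolding mm_def .
  have Bl: "B *v lift \<eta> = ?m *\<^sub>R lift ?e" using lift_act[OF AO(6) ce] unfolding mm_def .
  have "lift \<eta> = A *v (B *v lift \<eta>)" using AO(3) by (simp add: matrix_vector_mul_assoc)
  also have "\<dots> = ?m *\<^sub>R (A *v lift ?e)" by (subst Bl) (simp add: matrix_vector_mult_scaleR)
  finally have eq1: "lift \<eta> = ?m *\<^sub>R (A *v lift ?e)" .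
  have Ale: "A *v lift ?e = (1 / ?m) *\<^sub>R lift \<eta>" using m by (subst eq1) simp
  have e_ball: "?e \<in> ball 0 1" using act_ball[OF AO(2) AO(6) eta] .
  have set: "UP \<psi> \<eta> = (\<lambda>s. ?m * s + q \<bullet> lift \<eta>) ` UP \<phi> ?e"
  proof (rule set_eqI, rule iffI)
    fix x assume "x \<in> UP \<psi> \<eta>"
    then obtain p where x: "x = p \<bullet> lift \<eta>" and hp: "\<forall>w\<in>sphere 0 1. \<psi> w \<le> p \<bullet> lift w"
      by (auto simp: UP_def)
    define p' where "p' = transpose A *v (p - q)"
    have p'y: "p' \<bullet> y = (p - q) \<bullet> (A *v y)" for y unfolding p'_def by (rule inner_transpose)
    have "\<forall>z\<in>sphere 0 1. \<phi> z \<le> p' \<bullet> lift z"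
    proof
      fix z :: complex assume z: "z \<in> sphere 0 1"
      define ll where "ll = (A *v lift z)$1"
      let ?l = ll
      let ?w = "act A z"
      have cz: "cmod z \<le> 1" using z by simp
      have l: "?l > 0" using pos_lift[OF AO(5) cz] unfolding ll_def .
      have Al: "A *v lift z = ?l *\<^sub>R lift ?w" using lift_act[OF AO(5) cz] unfolding ll_def .
      have w: "?w \<in> sphere 0 1" using act_sphere[OF AO(1) AO(5) z] .
      have "lift z = B *v (A *v lift z)" using AO(4) by (simp add: matrix_vector_mul_assoc)
      also have "\<dots> = ?l *\<^sub>R (B *v lift ?w)" by (subst Al) (simp add: matrix_vector_mult_scaleR)
      finally have eq2: "lift z = ?l *\<^sub>R (B *v lift ?w)" .
      have Blw: "B *v lift ?w = (1 / ?l) *\<^sub>R lift z" using l by (subst eq2) simp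
      have "(B *v lift ?w)$1 = 1 / ?l" by (simp add: Blw)
      moreover have "act B ?w = Pi_proj ((1 / ?l) *\<^sub>R lift z)" unfolding Blw[symmetric] by (rule act_def)
      then have "act B ?w = z" using l by (simp add: Pi_proj_scale)
      ultimately have psiw: "\<psi> ?w = (1 / ?l) * \<phi> z + q \<bullet> lift ?w" using rel w by simp
      have "p' \<bullet> lift z = (p - q) \<bullet> (?l *\<^sub>R lift ?w)" by (simp add: p'y Al)
      also have "\<dots> = ?l * (p \<bullet> lift ?w - q \<bullet> lift ?w)" by (simp add: inner_diff_left)
      finally have pz: "p' \<bullet> lift z = ?l * (p \<bullet> lift ?w - q \<bullet> lift ?w)" .
      have "\<psi> ?w \<le> p \<bullet> lift ?w" using hp w by blast
      then have "(1 / ?l) * \<phi> z \<le> p \<bullet> lift ?w - q \<bullet> lift ?w" using psiw by linarith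
      then have "?l * ((1 / ?l) * \<phi> z) \<le> ?l * (p \<bullet> lift ?w - q \<bullet> lift ?w)"
        using l by (intro mult_left_mono) auto
      then show "\<phi> z \<le> p' \<bullet> lift z" using l pz by simp
    qed
    then have "p' \<bullet> lift ?e \<in> UP \<phi> ?e" unfolding UP_def by blast
    moreover have "x = ?m * (p' \<bullet> lift ?e) + q \<bullet> lift \<eta>"
      using m by (simp add: x p'y Ale inner_diff_left)
    ultimately show "x \<in> (\<lambda>s. ?m * s + q \<bullet> lift \<eta>) ` UP \<phi> ?e" by (rule rev_image_eqI)
  next
    fix x assume "x \<in> (\<lambda>s. ?m * s + q \<bullet> lift \<eta>) ` UP \<phi> ?e"
    then obtain s where s: "s \<in> UP \<phi> ?e" and x: "x = ?m * s + q \<bullet> lift \<eta>" by auto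
    obtain p' where s': "s = p' \<bullet> lift ?e" and hp': "\<forall>z\<in>sphere 0 1. \<phi> z \<le> p' \<bullet> lift z"
      using s unfolding UP_def by blast
    define p where "p = transpose B *v p' + q"
    have py: "p \<bullet> y = p' \<bullet> (B *v y) + q \<bullet> y" for y
      unfolding p_def by (simp add: inner_add_left dot_lmul_matrix)
    have "\<forall>w\<in>sphere 0 1. \<psi> w \<le> p \<bullet> lift w"
    proof
      fix w :: complex assume w: "w \<in> sphere 0 1"
      define nn where "nn = (B *v lift w)$1"
      let ?n = nn
      let ?z = "act B w"
      have cw: "cmod w \<le> 1" using w by simp
      have n: "?n > 0" using pos_lift[OF AO(6) cw] unfolding nn_def .
      have Bw: "B *v lift w = ?n *\<^sub>R lift ?z" using lift_act[OF AO(6) cw] unfolding nn_def .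
      have z: "?z \<in> sphere 0 1" using act_sphere[OF AO(2) AO(6) w] .
      have pw: "p \<bullet> lift w = ?n * (p' \<bullet> lift ?z) + q \<bullet> lift w" by (simp add: py Bw)
      have "\<phi> ?z \<le> p' \<bullet> lift ?z" using hp' z by blast
      then have "?n * \<phi> ?z \<le> ?n * (p' \<bullet> lift ?z)" using n by (intro mult_left_mono) auto
      moreover have "\<psi> w = ?n * \<phi> ?z + q \<bullet> lift w" using rel w unfolding nn_def by simp
      ultimately show "\<psi> w \<le> p \<bullet> lift w" using pw by simp
    qed
    then have "p \<bullet> lift \<eta> \<in> UP \<psi> \<eta>" unfolding UP_def by blast
    moreover have "p \<bullet> lift \<eta> = x" by (simp add: py Bl x s')
    ultimately show "x \<in> UP \<psi> \<eta>" by simp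
  qed
  show ?thesis unfolding mm_def[symmetric] set by (rule Inf_affine[OF UP_ne[OF bnd] UP_bdd[OF bnd e_ball] m])
qed


definition dP :: "real^3 \<Rightarrow> real^3 \<Rightarrow> complex" where
  "dP y d = Complex ((d$2 * y$1 - y$2 * d$1) / (y$1)^2) ((d$3 * y$1 - y$3 * d$1) / (y$1)^2)"

definition lin :: "complex \<Rightarrow> real^3" where
  "lin h = vector [0, Re h, Im h]"

lemma lin_nth[simp]: "lin h $ 1 = 0" "lin h $ 2 = Re h" "lin h $ 3 = Im h"
  by (simp_all add: lin_def)

lemmas hd_vec_nth = bounded_linear.has_derivative[OF bounded_linear_vec_nth]

lemma Pi_alt: "Pi_proj x = (of_real (x$2) + \<i> * of_real (x$3)) / of_real (x$1)"
  by (cases "x$1 = 0") (simp_all add: Pi_proj_def complex_eq_iff Re_divide Im_divide power2_eq_square)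

lemma Pi_deriv: assumes "y$1 \<noteq> 0" shows "(Pi_proj has_derivative dP y) (at y)"
proof -
  have "((\<lambda>x::real^3. (of_real (x$2) + \<i> * of_real (x$3)) / of_real (x$1)) has_derivative
     (\<lambda>d. ((of_real (d$2) + \<i> * of_real (d$3)) * of_real (y$1) - (of_real (y$2) + \<i> * of_real (y$3)) * of_real (d$1))
           / (of_real (y$1) * of_real (y$1)))) (at y)"
    by (intro has_derivative_divide' has_derivative_add has_derivative_mult_right has_derivative_of_real
        hd_vec_nth has_derivative_ident) (simp add: assms)
  moreover have "(\<lambda>x::real^3. (of_real (x$2) + \<i> * of_real (x$3)) / of_real (x$1)) = Pi_proj"
    by (simp add: fun_eq_iff Pi_alt)
  moreover have "(\<lambda>d. ((of_real (d$2) + \<i> * of_real (d$3)) * of_real (y$1) - (of_real (y$2) + \<i> * of_real (y$3)) * of_real (d$1))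
           / (of_real (y$1) * of_real (y$1))) = dP y"
    by (simp add: fun_eq_iff dP_def complex_eq_iff Re_divide Im_divide power2_eq_square)
  ultimately show ?thesis by simp
qed

lemma lin_add: "lin (x + y) = lin x + lin y" by (simp add: vec3_eq)
lemma lin_scale: "lin (c *\<^sub>R x) = c *\<^sub>R lin x" by (simp add: vec3_eq)

lemma lin_bl: "bounded_linear (\<lambda>h. A *v lin h)"
proof -
  have "linear (\<lambda>h. A *v lin h)"
    by (simp add: linear_iff lin_add lin_scale matrix_vector_right_distrib matrix_vector_mult_scaleR)
  then show ?thesis by (simp add: linear_conv_bounded_linear)
qed

lemma lift_lin: "lift h = vector [1, 0, 0] + lin h"
  by (simp add: vec3_eq)

lemma act_deriv: assumes "(A *v lift z)$1 \<noteq> 0"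
  shows "(act A has_derivative (\<lambda>h. dP (A *v lift z) (A *v lin h))) (at z)"
proof -
  have "((\<lambda>h. A *v lift h) has_derivative (\<lambda>h. A *v lin h)) (at z)"
  proof -
    have "((\<lambda>h. A *v vector [1, 0, 0] + A *v lin h) has_derivative (\<lambda>h. 0 + A *v lin h)) (at z)"
      by (rule has_derivative_add[OF has_derivative_const bounded_linear.has_derivative[OF lin_bl has_derivative_ident]])
    then show ?thesis by (simp add: lift_lin matrix_vector_right_distrib)
  qed
  from diff_chain_at[OF this Pi_deriv[OF assms]]
  have "((\<lambda>x. Pi_proj (A *v lift x)) has_derivative (\<lambda>h. dP (A *v lift z) (A *v lin h))) (at z)"
    by (simp add: o_def)
  moreover have "act A = (\<lambda>x. Pi_proj (A *v lift x))" by (rule ext) (simp add: act_def)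
  ultimately show ?thesis by simp
qed

lemma phi_formula: assumes "y$1 > 0" "mink y y = 0"
  shows "Re (dP y d / (\<i> * Pi_proj y)) = (y$2 * d$3 - y$3 * d$2) / (y$1)^2"
proof -
  have yy: "(y$2)^2 + (y$3)^2 = (y$1)^2" using assms(2) by (simp add: mink_def power2_eq_square)
  have "\<i> * Pi_proj y = Complex (- y$3 / y$1) (y$2 / y$1)" by (simp add: Pi_proj_def complex_eq_iff)
  moreover have "(- y$3 / y$1)^2 + (y$2 / y$1)^2 = 1" using yy assms(1) by (simp add: field_simps power2_eq_square)
  ultimately have "Re (dP y d / (\<i> * Pi_proj y)) =
     ((d$2 * y$1 - y$2 * d$1) / (y$1)^2) * (- y$3 / y$1) + ((d$3 * y$1 - y$3 * d$1) / (y$1)^2) * (y$2 / y$1)"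
    by (simp add: Re_divide dP_def)
  also have "\<dots> = (y$2 * d$3 - y$3 * d$2) / (y$1)^2" using assms(1) by (simp add: field_simps power2_eq_square)
  finally show ?thesis .
qed

lemma mcross_eq: "mcross x y = vector [-(x$2*y$3 - x$3*y$2), x$3*y$1 - x$1*y$3, x$1*y$2 - x$2*y$1]"
  unfolding mcross_def
proof (rule the_equality)
  show "\<forall>u. mink (vector [-(x$2*y$3 - x$3*y$2), x$3*y$1 - x$1*y$3, x$1*y$2 - x$2*y$1]) u = det (vector [x, y, u] :: real^3^3)"
    by (simp add: mink_def det_3 algebra_simps)
next
  fix w assume h: "\<forall>u. mink w u = det (vector [x, y, u] :: real^3^3)"
  have "mink w (vector [1,0,0]) = det (vector [x, y, vector [1,0,0]] :: real^3^3)"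
       "mink w (vector [0,1,0]) = det (vector [x, y, vector [0,1,0]] :: real^3^3)"
       "mink w (vector [0,0,1]) = det (vector [x, y, vector [0,0,1]] :: real^3^3)" using h by blast+
  then show "w = vector [-(x$2*y$3 - x$3*y$2), x$3*y$1 - x$1*y$3, x$1*y$2 - x$2*y$1]"
    by (simp add: mink_def det_3 vec3_eq algebra_simps)
qed


lemma mult_transpose_row: "((M::real^3^3) ** transpose (A::real^3^3)) $ i = A *v (M $ i)"
  unfolding vec_eq_iff matrix_matrix_mult_def transpose_def matrix_vector_mult_def
  by (simp add: mult.commute[of "M $ i $ _"])

lemma det_lemma:
  assumes AO: "A \<in> O12" "A ** B = mat 1" and z: "z \<in> sphere 0 1"
  shows "(A *v lift z)$2 * (A *v lin (\<i>*z))$3 - (A *v lift z)$3 * (A *v lin (\<i>*z))$2 = det A * (A *v lift z)$1"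
proof -
  define e1 :: "real^3" where "e1 = vector [1, 0, 0]"
  define u where "u = B *v e1"
  have Au: "A *v u = e1" unfolding u_def using AO(2) by (simp add: matrix_vector_mul_assoc)
  define M :: "real^3^3" where "M = vector [lift z, lin (\<i>*z), u]"
  define y where "y = A *v lift z"
  define t where "t = A *v lin (\<i>*z)"
  have N: "M ** transpose A = vector [y, t, e1]"
  proof -
    have "(M ** transpose A) $ i = vector [y, t, e1] $ i" for i
    proof -
      have "i = 1 \<or> i = 2 \<or> i = 3" using exhaust_3 by blast
      then show ?thesis
        by (elim disjE) (simp_all only: mult_transpose_row M_def vector_3 Au y_def t_def)
    qed
    then show ?thesis by (simp add: vec_eq_iff)
  qed
  have d1: "det (M ** transpose A) = det M * det A" by (simp add: det_mul)
  have d2: "det (vector [y, t, e1] :: real^3^3) = y$2 * t$3 - y$3 * t$2"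
    unfolding det_3 by (simp add: e1_def)
  have d3: "det M = u$1 * ((Re z)^2 + (Im z)^2) - Re z * u$2 - Im z * u$3"
    unfolding det_3 M_def by (simp add: power2_eq_square algebra_simps)
  have zz: "(Re z)^2 + (Im z)^2 = 1" using z by (simp add: cmod_power2[symmetric])
  have "mink (A *v lift z) (A *v u) = mink (lift z) u" using AO(1) by (simp add: O12_def)
  then have "mink y e1 = mink (lift z) u" by (simp add: Au y_def)
  then have mk: "- y$1 = - u$1 + Re z * u$2 + Im z * u$3" by (simp add: mink_def e1_def)
  have dM: "det M = y$1" using d3 zz mk by simp
  have "y$2 * t$3 - y$3 * t$2 = y$1 * det A" using d1 d2 dM N by simp
  then show ?thesis by (simp add: y_def t_def mult.commute)
qed

lemma dP_scale: "dP y (r *\<^sub>R d) = of_real r * dP y d"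
  by (simp add: dP_def complex_eq_iff field_simps)

lemma Killing_phi: assumes w: "w \<in> sphere 0 1"
  shows "phiY (Killing v) w = vector [- v$1, v$2, v$3] \<bullet> lift w"
proof -
  have fd: "frechet_derivative Pi_proj (at (lift w)) = dP (lift w)"
    using frechet_derivative_at[OF Pi_deriv[of "lift w"]] by simp
  have ww: "(Re w)^2 + (Im w)^2 = 1" using w by (simp add: cmod_power2[symmetric])
  have m0: "mink (lift w) (lift w) = 0" using w by (simp add: mink_lift)
  have "phiY (Killing v) w = Re (dP (lift w) (mcross (lift w) v) / (\<i> * Pi_proj (lift w)))"
    by (simp add: phiY_def Killing_def fd)
  also have "\<dots> = Re w * (mcross (lift w) v)$3 - Im w * (mcross (lift w) v)$2"
    using phi_formula[of "lift w", OF _ m0] by simp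
  also have "\<dots> = - v$1 * ((Re w)^2 + (Im w)^2) + Re w * v$2 + Im w * v$3"
    by (simp add: mcross_eq power2_eq_square algebra_simps)
  also have "\<dots> = vector [- v$1, v$2, v$3] \<bullet> lift w" by (simp add: ww inner3)
  finally show ?thesis .
qed

lemma push_phi:
  assumes AO: "A \<in> O12" "B \<in> O12" "A ** B = mat 1" "B ** A = mat 1" "tp A" "tp B" "det A = 1"
    and Bdef: "B = matrix_inv A"
    and vf: "vfield_on_circle X" and w: "w \<in> sphere 0 1"
  shows "phiY (pushfwd A X) w = (B *v lift w)$1 * phiY X (act B w)"
proof -
  define z where "z = act B w"
  have z: "z \<in> sphere 0 1" unfolding z_def using act_sphere[OF AO(2) AO(6) w] .
  have cz: "cmod z \<le> 1" using z by simp
  have cw: "cmod w \<le> 1" using w by simp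
  define y where "y = A *v lift z"
  define l where "l = y$1"
  have l: "l > 0" unfolding l_def y_def using pos_lift[OF AO(5) cz] .
  have azw: "act A z = w" unfolding z_def using act_inv[OF AO(3) AO(6) cw] .
  have Py: "Pi_proj y = w" using azw by (simp add: act_def y_def)
  have my: "mink y y = 0" unfolding y_def using AO(1) z by (simp add: O12_def mink_lift)
  have fd: "frechet_derivative (act A) (at z) = (\<lambda>h. dP y (A *v lin h))"
    using frechet_derivative_at[OF act_deriv[of A z]] l unfolding y_def l_def by simp
  define r where "r = phiY X z"
  have zr: "X z / (\<i> * z) \<in> \<real>" using vf z by (simp add: vfield_on_circle_def)
  have z0: "z \<noteq> 0" using z by auto
  have Xz: "X z = of_real r * (\<i> * z)"
  proof -
    have "of_real r = X z / (\<i> * z)" unfolding r_def phiY_def using zr by (simp add: of_real_Re)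
    then show ?thesis using z0 by simp
  qed
  have "pushfwd A X w = dP y (A *v lin (X z))"
    by (simp add: pushfwd_def Bdef[symmetric] z_def[symmetric] fd)
  also have "\<dots> = of_real r * dP y (A *v lin (\<i> * z))"
    by (simp add: Xz scaleR_conv_of_real[symmetric] lin_scale matrix_vector_mult_scaleR dP_scale)
  finally have pw: "pushfwd A X w = of_real r * dP y (A *v lin (\<i> * z))" .
  have ReM: "Re (complex_of_real r * q) = r * Re q" for q by simp
  have "phiY (pushfwd A X) w = Re (complex_of_real r * (dP y (A *v lin (\<i> * z)) / (\<i> * Pi_proj y)))"
    unfolding phiY_def pw Py by (simp only: times_divide_eq_right)
  also have "\<dots> = r * Re (dP y (A *v lin (\<i> * z)) / (\<i> * Pi_proj y))" by (rule ReM)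
  also have "\<dots> = r * ((y$2 * (A *v lin (\<i> * z))$3 - y$3 * (A *v lin (\<i> * z))$2) / (y$1)^2)"
    using phi_formula[OF _ my] l unfolding l_def by simp
  also have "\<dots> = r * (l / l^2)"
    using det_lemma[OF AO(1) AO(3) z] AO(7) unfolding y_def l_def by simp
  also have "\<dots> = r / l" using l by (simp add: power2_eq_square)
  finally have lhs: "phiY (pushfwd A X) w = r / l" .
  have "A *v lift z = l *\<^sub>R lift w" using lift_act[OF AO(5) cz] azw unfolding y_def l_def by simp
  then have Alz: "A *v lift z = l *\<^sub>R lift w" .
  have "lift z = B *v (A *v lift z)" using AO(4) by (simp add: matrix_vector_mul_assoc)
  also have "\<dots> = l *\<^sub>R (B *v lift w)" by (simp only: Alz matrix_vector_mult_scaleR)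
  finally have lzB: "lift z = l *\<^sub>R (B *v lift w)" .
  have "(lift z)$1 = l * (B *v lift w)$1" by (subst lzB) simp
  then have "1 = l * (B *v lift w)$1" by simp
  then have "(B *v lift w)$1 = 1 / l" using l by (simp add: field_simps)
  then show ?thesis using lhs by (simp add: r_def z_def)
qed


theorem lemma2p15:
  fixes X :: "complex \<Rightarrow> complex" and A :: "real^3^3" and v :: "real^3"
  assumes "continuous_on (sphere 0 1) X"
    and "vfield_on_circle X"
    and "A \<in> O0_12"
  shows "width (\<lambda>z. pushfwd A X z + Killing v z) = width X"
proof -
  define B where "B = matrix_inv A"
  have AO12: "A \<in> O12" using O0_O12[OF assms(3)] .
  have BO12: "B \<in> O12" unfolding B_def using inv_O12[OF AO12] .
  have AB: "A ** B = mat 1" and BA: "B ** A = mat 1" unfolding B_def using inv_props[OF AO12] by auto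
  have tpA: "tp A" using O0_tp[OF assms(3)] .
  have tpB: "tp B" using tp_inv[OF AO12 tpA AB BO12] .
  have detA: "det A = 1" using O0_det[OF assms(3)] .
  define Y where "Y = (\<lambda>z. pushfwd A X z + Killing v z)"
  define q :: "real^3" where "q = vector [- v$1, v$2, v$3]"
  have relY: "\<forall>w\<in>sphere 0 1. phiY Y w = (B *v lift w)$1 * phiY X (act B w) + q \<bullet> lift w"
  proof
    fix w :: complex assume w: "w \<in> sphere 0 1"
    have "phiY Y w = phiY (pushfwd A X) w + phiY (Killing v) w"
      by (simp add: phiY_def Y_def add_divide_distrib)
    then show "phiY Y w = (B *v lift w)$1 * phiY X (act B w) + q \<bullet> lift w"
      using push_phi[OF AO12 BO12 AB BA tpA tpB detA B_def assms(2) w] Killing_phi[OF w, of v]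
      by (simp add: q_def)
  qed
  have relY': "\<forall>w\<in>sphere 0 1. - phiY Y w = (B *v lift w)$1 * (- phiY X (act B w)) + (-q) \<bullet> lift w"
    using relY by simp
  have "continuous_on (sphere 0 1) (phiY X)"
    unfolding phiY_def[abs_def]
    by (intro continuous_intros assms(1)) auto
  then have "compact (phiY X ` sphere 0 1)" by (intro compact_continuous_image) auto
  then obtain M where M: "\<forall>x\<in>phiY X ` sphere 0 1. \<bar>x\<bar> \<le> M"
    using compact_imp_bounded bounded_real by metis
  then have bnd: "\<forall>z\<in>sphere 0 1. \<bar>phiY X z\<bar> \<le> M" by auto
  have bnd': "\<forall>z\<in>sphere 0 1. \<bar>- phiY X z\<bar> \<le> M" using bnd by simp
  define F where "F = (\<lambda>\<zeta>. ereal ((phi_plus X \<zeta> - phi_minus X \<zeta>) / sqrt (1 - (cmod \<zeta>)\<^sup>2)))"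
  have pt: "ereal ((phi_plus Y \<eta> - phi_minus Y \<eta>) / sqrt (1 - (cmod \<eta>)\<^sup>2)) = F (act B \<eta>)"
    if eta: "\<eta> \<in> ball 0 1" for \<eta>
  proof -
    define m where "m = (B *v lift \<eta>)$1"
    define e where "e = act B \<eta>"
    have ce: "cmod \<eta> \<le> 1" using eta by simp
    have m: "m > 0" unfolding m_def using pos_lift[OF tpB ce] .
    have P: "phi_plus Y \<eta> = m * phi_plus X e + q \<bullet> lift \<eta>"
      unfolding phi_plus_UP m_def e_def
      using core[OF AO12 BO12 AB BA tpA tpB bnd relY eta] .
    have "phi_minus Y \<eta> = - Inf (UP (\<lambda>z. - phiY Y z) \<eta>)" by (rule phi_minus_UP)
    also have "\<dots> = - (m * Inf (UP (\<lambda>z. - phiY X z) e) + (-q) \<bullet> lift \<eta>)"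
      unfolding m_def e_def
      using core[OF AO12 BO12 AB BA tpA tpB bnd' relY' eta] by simp
    also have "\<dots> = m * phi_minus X e + q \<bullet> lift \<eta>"
      by (simp add: phi_minus_UP)
    finally have Mi: "phi_minus Y \<eta> = m * phi_minus X e + q \<bullet> lift \<eta>" .
    have "(cmod e)^2 - 1 = ((cmod \<eta>)^2 - 1) / m^2"
      unfolding e_def m_def using act_norm[OF BO12 tpB ce] .
    then have "1 - (cmod \<eta>)^2 = m^2 * (1 - (cmod e)^2)" using m by (simp add: field_simps)
    then have sq: "sqrt (1 - (cmod \<eta>)^2) = m * sqrt (1 - (cmod e)^2)"
      using m by (simp add: real_sqrt_mult)
    have "(phi_plus Y \<eta> - phi_minus Y \<eta>) / sqrt (1 - (cmod \<eta>)\<^sup>2)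
        = (m * (phi_plus X e - phi_minus X e)) / (m * sqrt (1 - (cmod e)^2))"
      by (simp add: P Mi sq algebra_simps)
    also have "\<dots> = (phi_plus X e - phi_minus X e) / sqrt (1 - (cmod e)^2)"
      using m by simp
    finally show ?thesis by (simp add: F_def e_def)
  qed
  have img: "act B ` ball 0 1 = ball 0 1"
  proof
    show "act B ` ball 0 1 \<subseteq> ball 0 1" using act_ball[OF BO12 tpB] by blast
    show "ball 0 1 \<subseteq> act B ` ball 0 1"
    proof
      fix \<zeta> :: complex assume z: "\<zeta> \<in> ball 0 1"
      have "act B (act A \<zeta>) = \<zeta>" using act_inv[OF BA tpA] z by simp
      moreover have "act A \<zeta> \<in> ball 0 1" using act_ball[OF AO12 tpA z] .
      ultimately show "\<zeta> \<in> act B ` ball 0 1" by (metis image_eqI)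
    qed
  qed
  have "width Y = (SUP \<eta>\<in>ball 0 1. F (act B \<eta>))"
    unfolding width_def using pt by (intro SUP_cong) auto
  also have "\<dots> = (SUP \<zeta>\<in>act B ` ball 0 1. F \<zeta>)" by (simp add: image_comp o_def)
  also have "\<dots> = width X" unfolding img width_def F_def ..
  finally show ?thesis unfolding Y_def .
qed

end
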